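(* Let $q$ be a power of an odd prime. Then in ${\rm PG}(4,q)$ there exist a set $\mathcal L$ of $q^3+1$ pairwise skew lines and a set $\mathcal P$ of $q^3+1$ planes any two of which intersect in exactly one point, such that no line of $\mathcal L$ is contained in a plane of $\mathcal P$. *)

theory Defs
  imports "HOL-Analysis.Analysis"
begin

text \<open>PG(4,F) is modelled via the vector space F^5 (type 'a ^ 5).
  A projective subspace of projective dimension d is a linear subspace of
  vector-space dimension d+1. Points: dim 1, lines: dim 2, planes: dim 3.\<close>

definition pg_subspace_of_dim :: "nat \<Rightarrow> ('a::field ^ 5) set \<Rightarrow> bool" where
  "pg_subspace_of_dim d S \<longleftrightarrow> vec.subspace S \<and> vec.dim S = d + 1"

definition pg4_line :: "('a::field ^ 5) set \<Rightarrow> bool" where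
  "pg4_line L \<longleftrightarrow> pg_subspace_of_dim 1 L"

definition pg4_plane :: "('a::field ^ 5) set \<Rightarrow> bool" where
  "pg4_plane P \<longleftrightarrow> pg_subspace_of_dim 2 P"

text \<open>Two lines are skew iff they share no projective point, i.e. the
  underlying subspaces meet only in the zero vector.\<close>
definition pg_skew :: "('a::field ^ 5) set \<Rightarrow> ('a ^ 5) set \<Rightarrow> bool" where
  "pg_skew L M \<longleftrightarrow> L \<inter> M = {0}"

text \<open>Two subspaces meet in exactly one projective point iff their
  intersection is a 1-dimensional linear subspace.\<close>
definition pg_meet_in_one_point :: "('a::field ^ 5) set \<Rightarrow> ('a ^ 5) set \<Rightarrow> bool" where
  "pg_meet_in_one_point P Q \<longleftrightarrow> pg_subspace_of_dim 0 (P \<inter> Q)"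

end

theory Submission
  imports Defs
begin

lemma exhaust_5:
  fixes x :: 5
  shows "x = 1 \<or> x = 2 \<or> x = 3 \<or> x = 4 \<or> x = 5"
proof -
  have c: "card {1,2,3,4,5::5} = 5" by simp
  have "{1,2,3,4,5::5} = UNIV"
    by (rule card_subset_eq) (simp_all add: c)
  then show ?thesis by blast
qed

lemma forall_5: "(\<forall>i::5. P i) \<longleftrightarrow> P 1 \<and> P 2 \<and> P 3 \<and> P 4 \<and> P 5"
proof
  assume "P 1 \<and> P 2 \<and> P 3 \<and> P 4 \<and> P 5"
  show "\<forall>i. P i"
  proof
    fix i :: 5
    from exhaust_5[of i] \<open>P 1 \<and> P 2 \<and> P 3 \<and> P 4 \<and> P 5\<close> show "P i"
      by (elim disjE) simp_all
  qed
qed simp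

definition v5 :: "'a::zero \<Rightarrow> 'a \<Rightarrow> 'a \<Rightarrow> 'a \<Rightarrow> 'a \<Rightarrow> 'a^5" where
  "v5 x1 x2 x3 x4 x5 = (\<chi> i. if i = 1 then x1 else if i = 2 then x2 else if i = 3 then x3 else if i = 4 then x4 else x5)"

lemma v5_nth[simp]: "v5 x1 x2 x3 x4 x5 $ 1 = x1" "v5 x1 x2 x3 x4 x5 $ 2 = x2" "v5 x1 x2 x3 x4 x5 $ 3 = x3"
  "v5 x1 x2 x3 x4 x5 $ 4 = x4" "v5 x1 x2 x3 x4 x5 $ 5 = x5"
  by (simp_all add: v5_def)

lemma v5_eq[simp]: "v5 x1 x2 x3 x4 x5 = v5 y1 y2 y3 y4 y5 \<longleftrightarrow> x1 = y1 \<and> x2 = y2 \<and> x3 = y3 \<and> x4 = y4 \<and> x5 = y5"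
  by (metis v5_nth)

lemma v5_all: "(x::'a::zero^5) = v5 (x$1) (x$2) (x$3) (x$4) (x$5)"
  by (simp add: vec_eq_iff) (simp add: forall_5)

lemma v5_add[simp]: "v5 x1 x2 x3 x4 x5 + v5 y1 y2 y3 y4 y5 = v5 (x1+y1) (x2+y2) (x3+y3) (x4+y4) (x5+y5)"
  by (simp add: vec_eq_iff) (simp add: forall_5)
lemma v5_scale[simp]: "k *s v5 x1 x2 x3 x4 x5 = v5 (k*x1) (k*x2) (k*x3) (k*x4) (k*x5)"
  by (simp add: vec_eq_iff) (simp add: forall_5)
lemma v5_zero: "(0::'a::zero^5) = v5 0 0 0 0 0"
  by (simp add: vec_eq_iff) (simp add: forall_5)

lemma span1: "x \<in> vec.span {p} \<longleftrightarrow> (\<exists>s. x = s *s p)"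
  by (auto simp: vec.span_singleton)

lemma span2: "x \<in> vec.span {p, q} \<longleftrightarrow> (\<exists>s t. x = s *s p + t *s q)"
proof -
  have "x \<in> vec.span {p,q} \<longleftrightarrow> (\<exists>k. x - k *s p \<in> vec.span {q})"
    by (simp add: vec.span_insert)
  also have "\<dots> \<longleftrightarrow> (\<exists>k j. x - k *s p = j *s q)" by (simp add: span1)
  also have "\<dots> \<longleftrightarrow> (\<exists>k j. x = k *s p + j *s q)"
    by (simp only: diff_eq_eq ac_simps)
  finally show ?thesis .
qed

lemma span3: "x \<in> vec.span {p, q, r} \<longleftrightarrow> (\<exists>s t u. x = s *s p + t *s q + u *s r)"
proof -
  have "x \<in> vec.span {p,q,r} \<longleftrightarrow> (\<exists>k. x - k *s p \<in> vec.span {q,r})"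
    by (simp add: vec.span_insert)
  also have "\<dots> \<longleftrightarrow> (\<exists>k j l. x - k *s p = j *s q + l *s r)" by (simp add: span2)
  also have "\<dots> \<longleftrightarrow> (\<exists>k j l. x = k *s p + j *s q + l *s r)"
    by (simp only: diff_eq_eq ac_simps)
  finally show ?thesis .
qed

lemma dim1:
  assumes "z \<noteq> 0"
  shows "pg_subspace_of_dim 0 (vec.span {z})"
proof -
  have "vec.independent {z}"
    using assms by (intro vec.independent_insertI) (auto simp: vec.independent_empty)
  then show ?thesis unfolding pg_subspace_of_dim_def
    by (simp add: vec.dim_span_eq_card_independent vec.dim_eq_card_independent vec.subspace_span)
qed

lemma dim2:
  assumes h: "\<And>s t. s *s p + t *s q = (0::'a::field^5) \<Longrightarrow> s = 0 \<and> t = 0"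
  shows "pg_subspace_of_dim 1 (vec.span {p, q})"
proof -
  have q0: "q \<noteq> 0" using h[of 0 1] by auto
  have pq: "p \<noteq> q" using h[of 1 "-1"] by auto
  have "p \<notin> vec.span {q}"
  proof
    assume "p \<in> vec.span {q}"
    then obtain s where "p = s *s q" by (auto simp: span1)
    then have "1 *s p + (- s) *s q = 0" by simp
    then show False using h by fastforce
  qed
  moreover have "vec.independent {q}"
    using q0 by (intro vec.independent_insertI) (auto simp: vec.independent_empty)
  ultimately have "vec.independent {p, q}" by (rule vec.independent_insertI)
  then show ?thesis unfolding pg_subspace_of_dim_def
    using pq by (simp add: vec.dim_span_eq_card_independent vec.dim_eq_card_independent vec.subspace_span)
qed

lemma dim3:
  assumes h: "\<And>s t u. s *s p + t *s q + u *s r = (0::'a::field^5) \<Longrightarrow> s = 0 \<and> t = 0 \<and> u = 0"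
  shows "pg_subspace_of_dim 2 (vec.span {p, q, r})"
proof -
  have r0: "r \<noteq> 0" using h[of 0 0 1] by auto
  have pq: "p \<noteq> q" using h[of 1 "-1" 0] by auto
  have pr: "p \<noteq> r" using h[of 1 0 "-1"] by auto
  have qr: "q \<noteq> r" using h[of 0 1 "-1"] by auto
  have "q \<notin> vec.span {r}"
  proof
    assume "q \<in> vec.span {r}"
    then obtain s where "q = s *s r" by (auto simp: span1)
    then have "0 *s p + 1 *s q + (- s) *s r = 0" by simp
    then show False using h by fastforce
  qed
  moreover have "vec.independent {r}"
    using r0 by (intro vec.independent_insertI) (auto simp: vec.independent_empty)
  ultimately have i2: "vec.independent {q, r}" by (rule vec.independent_insertI)
  have pn: "p \<notin> vec.span {q, r}"
  proof
    assume "p \<in> vec.span {q, r}"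
    then obtain s t where "p = s *s q + t *s r" by (auto simp: span2)
    then have "1 *s p + (- s) *s q + (- t) *s r = 0" by simp
    then show False using h by fastforce
  qed
  have "vec.independent {p, q, r}" by (rule vec.independent_insertI[OF pn i2])
  then show ?thesis unfolding pg_subspace_of_dim_def
    using pq pr qr by (simp add: vec.dim_span_eq_card_independent vec.dim_eq_card_independent vec.subspace_span)
qed

definition noroot :: "'a::field \<Rightarrow> 'a \<Rightarrow> 'a \<Rightarrow> bool" where
  "noroot a b c \<longleftrightarrow> (\<forall>r. r^3 + a * r^2 + b * r + c \<noteq> 0)"

lemma exists_noroot: "\<exists>a b c :: 'a::{field,finite}. noroot a b c"
proof (rule ccontr)
  assume "\<not> ?thesis"
  then have h: "\<forall>a b c :: 'a. \<exists>r. r^3 + a * r^2 + b * r + c = 0"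
    by (auto simp: noroot_def)
  define g :: "'a \<times> 'a \<times> 'a \<Rightarrow> 'a \<times> 'a \<times> 'a" where
    "g = (\<lambda>(r, a, b). (a, b, - (r^3 + a * r^2 + b * r)))"
  have "surj g" unfolding surj_def
  proof
    fix x :: "'a \<times> 'a \<times> 'a"
    obtain a b c where x: "x = (a, b, c)" by (cases x) auto
    from h obtain r where "r^3 + a * r^2 + b * r + c = 0" by blast
    then have "c = - (r^3 + a * r^2 + b * r)"
      by (simp only: eq_neg_iff_add_eq_0) (simp add: ac_simps)
    then have "g (r, a, b) = x" unfolding g_def x by simp
    then show "\<exists>y. x = g y" by metis
  qed
  then have ig: "inj g" by (rule finite_UNIV_surj_inj[rotated]) simp
  have eq: "g (0, -1, 0) = g (1, -1, 0)" by (simp add: g_def)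
  have "((0::'a), (-1::'a), (0::'a)) = (1, -1, 0)" by (rule injD[OF ig eq])
  then show False by simp
qed

lemma noroot_c: "noroot a b (c::'a::field) \<Longrightarrow> c \<noteq> 0"
  unfolding noroot_def by (metis add.right_neutral mult_zero_right power_zero_numeral zero_power2 add_0)

lemma noeig:
  fixes a b c :: "'a::field"
  assumes nr: "noroot a b c"
    and e1: "-c * v3 = l * v1" and e2: "v1 - b * v3 = l * v2" and e3: "v2 - a * v3 = l * v3"
  shows "v1 = 0 \<and> v2 = 0 \<and> v3 = 0"
proof -
  have f2: "v2 = (l+a) * v3" using e3 by (simp add: algebra_simps eq_diff_eq)
  have "v1 = l * v2 + b * v3" using e2 by (simp add: algebra_simps eq_diff_eq)
  with f2 have f1: "v1 = (l^2 + a * l + b) * v3" by (simp add: algebra_simps power2_eq_square)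
  have "(l^3 + a * l^2 + b * l + c) * v3 = l * v1 + c * v3"
    using f1 by (simp add: algebra_simps power2_eq_square power3_eq_cube)
  also have "\<dots> = 0" by (simp add: e1[symmetric])
  finally have "v3 = 0" using nr unfolding noroot_def by auto
  with f1 f2 show ?thesis by simp
qed

lemma comb:
  fixes a b c :: "'a::field"
  assumes nr: "noroot a b c"
    and e1: "s * v1 + t * (-c * v3) = 0" and e2: "s * v2 + t * (v1 - b * v3) = 0" and e3: "s * v3 + t * (v2 - a * v3) = 0"
  shows "(s = 0 \<and> t = 0) \<or> (v1 = 0 \<and> v2 = 0 \<and> v3 = 0)"
proof (cases "t = 0")
  case True
  then show ?thesis using e1 e2 e3 by auto
next
  case False
  let ?l = "- s / t"
  have "-c * v3 = ?l * v1" using e1 False by (simp add: field_simps; simp add: algebra_simps eq_neg_iff_add_eq_0 neg_eq_iff_add_eq_0)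
  moreover have "v1 - b * v3 = ?l * v2" using e2 False by (simp add: field_simps; simp add: algebra_simps eq_neg_iff_add_eq_0 neg_eq_iff_add_eq_0)
  moreover have "v2 - a * v3 = ?l * v3" using e3 False by (simp add: field_simps; simp add: algebra_simps eq_neg_iff_add_eq_0 neg_eq_iff_add_eq_0)
  ultimately show ?thesis using noeig[OF nr] by blast
qed

lemma noeigT:
  fixes a b c :: "'a::field"
  assumes nr: "noroot a b c"
    and e1: "v2 = l * v1" and e2: "v3 = l * v2" and e3: "-c * v1 - b * v2 - a * v3 = l * v3"
  shows "v1 = 0 \<and> v2 = 0 \<and> v3 = 0"
proof -
  have "(l^3 + a * l^2 + b * l + c) * v1 = 0"
    using e3 unfolding e2 e1 by (simp add: algebra_simps power2_eq_square power3_eq_cube neg_eq_iff_add_eq_0)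
  then have "v1 = 0" using nr unfolding noroot_def by auto
  with e1 e2 show ?thesis by simp
qed

lemma par:
  fixes z1 z2 z3 y1 y2 y3 :: "'a::field"
  assumes nz: "z1 \<noteq> 0 \<or> z2 \<noteq> 0 \<or> z3 \<noteq> 0"
    and c1: "z2 * y3 - z3 * y2 = 0" and c2: "z3 * y1 - z1 * y3 = 0" and c3: "z1 * y2 - z2 * y1 = 0"
  shows "\<exists>k. y1 = k * z1 \<and> y2 = k * z2 \<and> y3 = k * z3"
proof -
  consider "z1 \<noteq> 0" | "z2 \<noteq> 0" | "z3 \<noteq> 0" using nz by blast
  then show ?thesis
  proof cases
    case 1
    show ?thesis
      by (rule exI[of _ "y1/z1"]) (use 1 c2 c3 in \<open>simp add: field_simps\<close>)
  next
    case 2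
    show ?thesis
      by (rule exI[of _ "y2/z2"]) (use 2 c1 c3 in \<open>simp add: field_simps\<close>)
  next
    case 3
    show ?thesis
      by (rule exI[of _ "y3/z3"]) (use 3 c1 c2 in \<open>simp add: field_simps\<close>)
  qed
qed

lemma int0: "0 \<in> A \<Longrightarrow> 0 \<in> B \<Longrightarrow> (\<And>x. x \<in> A \<Longrightarrow> x \<in> B \<Longrightarrow> x = 0) \<Longrightarrow> A \<inter> B = {0}"
  by blast

definition lineL :: "'a::field \<Rightarrow> 'a \<Rightarrow> 'a \<Rightarrow> 'a \<Rightarrow> 'a \<Rightarrow> 'a \<Rightarrow> ('a^5) set" where
  "lineL a b c w1 w2 w3 = vec.span {v5 1 0 w1 w2 w3, v5 0 1 (- c * w3) (w1 - b * w3) (w2 - a * w3)}"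

definition ptL :: "'a::field \<Rightarrow> 'a \<Rightarrow> 'a \<Rightarrow> 'a \<Rightarrow> 'a \<Rightarrow> 'a \<Rightarrow> 'a \<Rightarrow> 'a \<Rightarrow> 'a^5" where
  "ptL a b c w1 w2 w3 s t = v5 s t (s * w1 + t * (- c * w3)) (s * w2 + t * (w1 - b * w3)) (s * w3 + t * (w2 - a * w3))"

lemma mem_lineL: "x \<in> lineL a b c w1 w2 w3 \<longleftrightarrow> (\<exists>s t. x = ptL a b c w1 w2 w3 s t)"
proof -
  have "\<And>s t. s *s v5 1 0 w1 w2 w3 + t *s v5 0 1 (- c * w3) (w1 - b * w3) (w2 - a * w3) = ptL a b c w1 w2 w3 s t"
    by (simp add: ptL_def)
  then show ?thesis unfolding lineL_def span2 by simp
qed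

lemma zero_lineL: "0 \<in> lineL a b c w1 w2 w3"
  unfolding lineL_def by (rule vec.span_zero)

definition lineN :: "'a::field \<Rightarrow> 'a \<Rightarrow> ('a^5) set" where
  "lineN d1 d2 = vec.span {v5 d1 d2 0 0 0, v5 0 0 d1 d2 0}"

lemma mem_lineN: "x \<in> lineN d1 d2 \<longleftrightarrow> (\<exists>s t. x = v5 (s * d1) (s * d2) (t * d1) (t * d2) 0)"
  unfolding lineN_def span2 by simp

lemma zero_lineN: "0 \<in> lineN d1 d2"
  unfolding lineN_def by (rule vec.span_zero)

definition ptP :: "'a::field \<Rightarrow> 'a \<Rightarrow> 'a \<Rightarrow> 'a \<Rightarrow> 'a \<Rightarrow> 'a \<Rightarrow> 'a \<Rightarrow> 'a \<Rightarrow> 'a \<Rightarrow> 'a^5" where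
  "ptP a b c u1 u2 u3 y1 y2 y3 = v5 (u1 * y1 + u2 * y2 + u3 * y3)
     ((u1 + u2) * y1 + (u2 + u3) * y2 + (u3 - c * u1 - b * u2 - a * u3) * y3) y1 y2 y3"

definition planeP :: "'a::field \<Rightarrow> 'a \<Rightarrow> 'a \<Rightarrow> 'a \<Rightarrow> 'a \<Rightarrow> 'a \<Rightarrow> ('a^5) set" where
  "planeP a b c u1 u2 u3 = vec.span {v5 u1 (u1 + u2) 1 0 0, v5 u2 (u2 + u3) 0 1 0,
      v5 u3 (u3 - c * u1 - b * u2 - a * u3) 0 0 1}"

lemma mem_planeP: "x \<in> planeP a b c u1 u2 u3 \<longleftrightarrow> (\<exists>y1 y2 y3. x = ptP a b c u1 u2 u3 y1 y2 y3)"
proof -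
  have "\<And>s t r. s *s v5 u1 (u1 + u2) 1 0 0 + t *s v5 u2 (u2 + u3) 0 1 0 +
      r *s v5 u3 (u3 - c * u1 - b * u2 - a * u3) 0 0 1 = ptP a b c u1 u2 u3 s t r"
    by (simp add: ptP_def algebra_simps)
  then show ?thesis unfolding planeP_def span3 by simp
qed

definition planeInf :: "('a::field^5) set" where
  "planeInf = vec.span {v5 1 0 0 0 0, v5 0 1 0 0 0, v5 0 0 0 0 1}"

lemma mem_planeInf: "x \<in> planeInf \<longleftrightarrow> (\<exists>r s t. x = v5 r s 0 0 t)"
  unfolding planeInf_def span3 by simp

lemma line_lineL: "pg4_line (lineL a b c w1 w2 w3)"
  unfolding pg4_line_def lineL_def by (rule dim2) (simp add: v5_zero)

lemma line_lineN: "d1 \<noteq> 0 \<or> d2 \<noteq> 0 \<Longrightarrow> pg4_line (lineN d1 d2)"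
  unfolding pg4_line_def lineN_def by (rule dim2) (auto simp: v5_zero)

lemma plane_planeP: "pg4_plane (planeP a b c u1 u2 u3)"
  unfolding pg4_plane_def planeP_def by (rule dim3) (simp add: v5_zero)

lemma plane_planeInf: "pg4_plane planeInf"
  unfolding pg4_plane_def planeInf_def by (rule dim3) (simp add: v5_zero)

lemma skewLL:
  fixes a b c :: "'a::field"
  assumes nr: "noroot a b c" and ne: "(w1, w2, w3) \<noteq> (v1, v2, v3)"
  shows "lineL a b c w1 w2 w3 \<inter> lineL a b c v1 v2 v3 = {0}"
proof (rule int0[OF zero_lineL zero_lineL])
  fix x assume m1: "x \<in> lineL a b c w1 w2 w3" and m2: "x \<in> lineL a b c v1 v2 v3"
  from m1 obtain s t where x1: "x = ptL a b c w1 w2 w3 s t" unfolding mem_lineL by blast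
  from m2 obtain s' t' where x2: "x = ptL a b c v1 v2 v3 s' t'" unfolding mem_lineL by blast
  from x1 x2 have "ptL a b c w1 w2 w3 s t = ptL a b c v1 v2 v3 s' t'" by simp
  then have ss: "s' = s" "t' = t" and
    e1: "s * w1 + t * (- c * w3) = s * v1 + t * (- c * v3)" and
    e2: "s * w2 + t * (w1 - b * w3) = s * v2 + t * (v1 - b * v3)" and
    e3: "s * w3 + t * (w2 - a * w3) = s * v3 + t * (v2 - a * v3)"
    by (auto simp: ptL_def)
  have "(s = 0 \<and> t = 0) \<or> (w1 - v1 = 0 \<and> w2 - v2 = 0 \<and> w3 - v3 = 0)"
  proof (rule comb[OF nr])
    show "s * (w1 - v1) + t * (- c * (w3 - v3)) = 0" using e1 by algebra
    show "s * (w2 - v2) + t * (w1 - v1 - b * (w3 - v3)) = 0" using e2 by algebra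
    show "s * (w3 - v3) + t * (w2 - v2 - a * (w3 - v3)) = 0" using e3 by algebra
  qed
  then have "s = 0 \<and> t = 0" using ne by auto
  then show "x = 0" using x1 by (simp add: ptL_def v5_zero)
qed

lemma skewLN:
  fixes a b c :: "'a::field"
  assumes nr: "noroot a b c" and w: "w2 \<noteq> 0 \<or> w3 \<noteq> 0" and d: "d1 \<noteq> 0 \<or> d2 \<noteq> 0"
  shows "lineL a b c w1 w2 w3 \<inter> lineN d1 d2 = {0}"
proof (rule int0[OF zero_lineL zero_lineN])
  fix x assume m1: "x \<in> lineL a b c w1 w2 w3" and m2: "x \<in> lineN d1 d2"
  from m1 obtain s t where x1: "x = ptL a b c w1 w2 w3 s t" unfolding mem_lineL by blast
  from m2 obtain sg tu where x2: "x = v5 (sg * d1) (sg * d2) (tu * d1) (tu * d2) 0"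
    unfolding mem_lineN by blast
  from x1 x2 have "ptL a b c w1 w2 w3 s t = v5 (sg * d1) (sg * d2) (tu * d1) (tu * d2) 0" by simp
  then have s: "s = sg * d1" and t: "t = sg * d2" and
    e1: "s * w1 + t * (- c * w3) = tu * d1" and
    e2: "s * w2 + t * (w1 - b * w3) = tu * d2" and
    e3: "s * w3 + t * (w2 - a * w3) = 0"
    by (auto simp: ptL_def)
  have "(d1 = 0 \<and> d2 = 0) \<or> (sg * w1 - tu = 0 \<and> sg * w2 = 0 \<and> sg * w3 = 0)"
  proof (rule comb[OF nr])
    show "d1 * (sg * w1 - tu) + d2 * (- c * (sg * w3)) = 0" using e1 unfolding s t by algebra
    show "d1 * (sg * w2) + d2 * (sg * w1 - tu - b * (sg * w3)) = 0" using e2 unfolding s t by algebra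
    show "d1 * (sg * w3) + d2 * (sg * w2 - a * (sg * w3)) = 0" using e3 unfolding s t by algebra
  qed
  then have "sg = 0" using d w by auto
  then have "tu * d1 = 0" "tu * d2 = 0" using e1 e2 s t by auto
  then have "tu = 0" using d by auto
  with \<open>sg = 0\<close> show "x = 0" using x2 by (simp add: v5_zero)
qed

lemma skewNN:
  fixes d1 d2 e1 e2 :: "'a::field"
  assumes ne: "d1 * e2 - d2 * e1 \<noteq> 0"
  shows "lineN d1 d2 \<inter> lineN e1 e2 = {0}"
proof (rule int0[OF zero_lineN zero_lineN])
  fix x assume m1: "x \<in> lineN d1 d2" and m2: "x \<in> lineN e1 e2"
  from m1 obtain s t where x1: "x = v5 (s * d1) (s * d2) (t * d1) (t * d2) 0"
    unfolding mem_lineN by blast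
  from m2 obtain s' t' where x2: "x = v5 (s' * e1) (s' * e2) (t' * e1) (t' * e2) 0"
    unfolding mem_lineN by blast
  from x1 x2 have h: "s * d1 = s' * e1" "s * d2 = s' * e2" "t * d1 = t' * e1" "t * d2 = t' * e2" by auto
  have "s * (d1 * e2 - d2 * e1) = 0" using h(1,2) by algebra
  then have "s = 0" using ne by simp
  have "t * (d1 * e2 - d2 * e1) = 0" using h(3,4) by algebra
  then have "t = 0" using ne by simp
  show "x = 0" using x1 \<open>s = 0\<close> \<open>t = 0\<close> by (simp add: v5_zero)
qed

lemma notsub_LP:
  fixes a b c :: "'a::field"
  shows "\<not> lineL a b c w1 w2 w3 \<subseteq> planeP a b c u1 u2 u3"
proof
  assume sub: "lineL a b c w1 w2 w3 \<subseteq> planeP a b c u1 u2 u3"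
  have "ptL a b c w1 w2 w3 1 0 \<in> lineL a b c w1 w2 w3" by (auto simp: mem_lineL)
  with sub have "ptL a b c w1 w2 w3 1 0 \<in> planeP a b c u1 u2 u3" by blast
  then obtain y1 y2 y3 where h1: "ptL a b c w1 w2 w3 1 0 = ptP a b c u1 u2 u3 y1 y2 y3"
    unfolding mem_planeP by blast
  have "ptL a b c w1 w2 w3 0 1 \<in> lineL a b c w1 w2 w3" by (auto simp: mem_lineL)
  with sub have "ptL a b c w1 w2 w3 0 1 \<in> planeP a b c u1 u2 u3" by blast
  then obtain z1 z2 z3 where h2: "ptL a b c w1 w2 w3 0 1 = ptP a b c u1 u2 u3 z1 z2 z3"
    unfolding mem_planeP by blast
  from h1 have y: "y1 = w1" "y2 = w2" "y3 = w3" and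
    f1: "1 = u1 * w1 + u2 * w2 + u3 * w3" and
    f2: "0 = (u1 + u2) * w1 + (u2 + u3) * w2 + (u3 - c * u1 - b * u2 - a * u3) * w3"
    by (auto simp: ptL_def ptP_def)
  from h2 have z: "z1 = - c * w3" "z2 = w1 - b * w3" "z3 = w2 - a * w3" and
    f3: "0 = u1 * z1 + u2 * z2 + u3 * z3"
    by (auto simp: ptL_def ptP_def)
  have "(1::'a) = 0" using f1 f2 f3 unfolding z by algebra
  then show False by simp
qed

lemma notsub_LI:
  fixes a b c :: "'a::field"
  assumes nr: "noroot a b c" and w: "w2 \<noteq> 0 \<or> w3 \<noteq> 0"
  shows "\<not> lineL a b c w1 w2 w3 \<subseteq> planeInf"
proof
  assume sub: "lineL a b c w1 w2 w3 \<subseteq> planeInf"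
  have "ptL a b c w1 w2 w3 1 0 \<in> lineL a b c w1 w2 w3" by (auto simp: mem_lineL)
  with sub have "w2 = 0" by (auto simp: mem_planeInf ptL_def)
  have "ptL a b c w1 w2 w3 0 1 \<in> lineL a b c w1 w2 w3" by (auto simp: mem_lineL)
  with sub have "c * w3 = 0" by (auto simp: mem_planeInf ptL_def)
  then have "w3 = 0" using noroot_c[OF nr] by simp
  with \<open>w2 = 0\<close> w show False by simp
qed

lemma notsub_NP:
  fixes a b c :: "'a::field"
  assumes d: "d1 \<noteq> 0 \<or> d2 \<noteq> 0"
  shows "\<not> lineN d1 d2 \<subseteq> planeP a b c u1 u2 u3"
proof
  assume sub: "lineN d1 d2 \<subseteq> planeP a b c u1 u2 u3"
  have "v5 d1 d2 0 0 0 \<in> lineN d1 d2" unfolding mem_lineN by (rule exI[of _ 1], rule exI[of _ 0]) simp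
  with sub have "v5 d1 d2 0 0 0 \<in> planeP a b c u1 u2 u3" by blast
  then obtain y1 y2 y3 where "v5 d1 d2 0 0 0 = ptP a b c u1 u2 u3 y1 y2 y3"
    unfolding mem_planeP by blast
  then show False using d by (simp add: ptP_def)
qed

lemma notsub_NI:
  fixes d1 d2 :: "'a::field"
  assumes d: "d1 \<noteq> 0 \<or> d2 \<noteq> 0"
  shows "\<not> lineN d1 d2 \<subseteq> planeInf"
proof
  assume sub: "lineN d1 d2 \<subseteq> planeInf"
  have "v5 0 0 d1 d2 0 \<in> lineN d1 d2" unfolding mem_lineN by (rule exI[of _ 0], rule exI[of _ 1]) simp
  with sub show False using d by (auto simp: mem_planeInf)
qed

lemma ptP_scale: "k *s ptP a b c u1 u2 u3 y1 y2 y3 = ptP a b c u1 u2 u3 (k * y1) (k * y2) (k * y3)"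
  by (simp add: ptP_def algebra_simps)

lemma meet_of_span: "P \<inter> Q = vec.span {p} \<Longrightarrow> p \<noteq> 0 \<Longrightarrow> pg_meet_in_one_point P Q"
  unfolding pg_meet_in_one_point_def by (simp add: dim1)

lemma meetPP:
  fixes a b c :: "'a::field"
  assumes nr: "noroot a b c" and ne: "(u1, u2, u3) \<noteq> (v1, v2, v3)"
  shows "pg_meet_in_one_point (planeP a b c u1 u2 u3) (planeP a b c v1 v2 v3)"
proof -
  define d1 where "d1 = u1 - v1"
  define d2 where "d2 = u2 - v2"
  define d3 where "d3 = u3 - v3"
  define q1 where "q1 = d2"
  define q2 where "q2 = d3"
  define q3 where "q3 = - c * d1 - b * d2 - a * d3"
  define z1 where "z1 = d2 * q3 - d3 * q2"
  define z2 where "z2 = d3 * q1 - d1 * q3"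
  define z3 where "z3 = d1 * q2 - d2 * q1"
  have dnz: "d1 \<noteq> 0 \<or> d2 \<noteq> 0 \<or> d3 \<noteq> 0" using ne by (auto simp: d1_def d2_def d3_def)
  have znz: "z1 \<noteq> 0 \<or> z2 \<noteq> 0 \<or> z3 \<noteq> 0"
  proof (rule ccontr)
    assume "\<not> ?thesis"
    then have "z1 = 0" "z2 = 0" "z3 = 0" by auto
    then obtain k where k: "q1 = k * d1" "q2 = k * d2" "q3 = k * d3"
      using par[OF dnz, of q3 q2 q1] unfolding z1_def z2_def z3_def by auto
    have "d1 = 0 \<and> d2 = 0 \<and> d3 = 0"
    proof (rule noeigT[OF nr])
      show "d2 = k * d1" using k q1_def by simp
      show "d3 = k * d2" using k q2_def by simp
      show "- c * d1 - b * d2 - a * d3 = k * d3" using k q3_def by simp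
    qed
    with dnz show False by simp
  qed
  let ?p = "ptP a b c u1 u2 u3 z1 z2 z3"
  have pnz: "?p \<noteq> 0" using znz by (auto simp: ptP_def v5_zero)
  have dz: "d1 * z1 + d2 * z2 + d3 * z3 = 0" unfolding z1_def z2_def z3_def by algebra
  have qz: "q1 * z1 + q2 * z2 + q3 * z3 = 0" unfolding z1_def z2_def z3_def by algebra
  have "planeP a b c u1 u2 u3 \<inter> planeP a b c v1 v2 v3 = vec.span {?p}"
  proof (intro set_eqI iffI)
    fix x assume "x \<in> planeP a b c u1 u2 u3 \<inter> planeP a b c v1 v2 v3"
    then have m1: "x \<in> planeP a b c u1 u2 u3" and m2: "x \<in> planeP a b c v1 v2 v3" by auto
    from m1 obtain y1 y2 y3 where x1: "x = ptP a b c u1 u2 u3 y1 y2 y3" unfolding mem_planeP by blast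
    from m2 obtain y1' y2' y3' where x2: "x = ptP a b c v1 v2 v3 y1' y2' y3'" unfolding mem_planeP by blast
    from x1 x2 have "ptP a b c u1 u2 u3 y1 y2 y3 = ptP a b c v1 v2 v3 y1' y2' y3'" by simp
    then have yy: "y1' = y1" "y2' = y2" "y3' = y3" and
      g1: "u1 * y1 + u2 * y2 + u3 * y3 = v1 * y1 + v2 * y2 + v3 * y3" and
      g2: "(u1 + u2) * y1 + (u2 + u3) * y2 + (u3 - c * u1 - b * u2 - a * u3) * y3 =
           (v1 + v2) * y1 + (v2 + v3) * y2 + (v3 - c * v1 - b * v2 - a * v3) * y3"
      by (auto simp: ptP_def)
    have D1: "d1 * y1 + d2 * y2 + d3 * y3 = 0" using g1 unfolding d1_def d2_def d3_def by algebra
    have D2: "q1 * y1 + q2 * y2 + q3 * y3 = 0" using g1 g2 unfolding q1_def q2_def q3_def d1_def d2_def d3_def by algebra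
    obtain k where k: "y1 = k * z1" "y2 = k * z2" "y3 = k * z3"
    proof -
      have "\<exists>k. y1 = k * z1 \<and> y2 = k * z2 \<and> y3 = k * z3"
      proof (rule par[OF znz])
        show "z2 * y3 - z3 * y2 = 0" using D1 D2 unfolding z1_def z2_def z3_def by algebra
        show "z3 * y1 - z1 * y3 = 0" using D1 D2 unfolding z1_def z2_def z3_def by algebra
        show "z1 * y2 - z2 * y1 = 0" using D1 D2 unfolding z1_def z2_def z3_def by algebra
      qed
      then show ?thesis using that by blast
    qed
    have "x = k *s ?p" unfolding x1 ptP_scale k by simp
    then show "x \<in> vec.span {?p}" unfolding span1 by blast
  next
    fix x assume "x \<in> vec.span {?p}"
    then obtain k where xk: "x = k *s ?p" unfolding span1 by blast
    then have x1: "x = ptP a b c u1 u2 u3 (k * z1) (k * z2) (k * z3)" by (simp add: ptP_scale)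
    have "ptP a b c u1 u2 u3 (k * z1) (k * z2) (k * z3) = ptP a b c v1 v2 v3 (k * z1) (k * z2) (k * z3)"
    proof -
      have "u1 * (k * z1) + u2 * (k * z2) + u3 * (k * z3) = v1 * (k * z1) + v2 * (k * z2) + v3 * (k * z3)"
        using dz unfolding d1_def d2_def d3_def by algebra
      moreover have "(u1 + u2) * (k * z1) + (u2 + u3) * (k * z2) + (u3 - c * u1 - b * u2 - a * u3) * (k * z3) =
           (v1 + v2) * (k * z1) + (v2 + v3) * (k * z2) + (v3 - c * v1 - b * v2 - a * v3) * (k * z3)"
        using dz qz unfolding q1_def q2_def q3_def d1_def d2_def d3_def by algebra
      ultimately show ?thesis by (simp add: ptP_def)
    qed
    with x1 show "x \<in> planeP a b c u1 u2 u3 \<inter> planeP a b c v1 v2 v3"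
      unfolding Int_iff mem_planeP by blast
  qed
  then show ?thesis using pnz by (rule meet_of_span)
qed

lemma meetPI:
  fixes a b c :: "'a::field"
  shows "planeP a b c u1 u2 u3 \<inter> planeInf = vec.span {ptP a b c u1 u2 u3 0 0 1}"
proof (intro set_eqI iffI)
  fix x assume "x \<in> planeP a b c u1 u2 u3 \<inter> planeInf"
  then have m1: "x \<in> planeP a b c u1 u2 u3" and m2: "x \<in> planeInf" by auto
  from m1 obtain y1 y2 y3 where x1: "x = ptP a b c u1 u2 u3 y1 y2 y3" unfolding mem_planeP by blast
  from m2 obtain r s t where x2: "x = v5 r s 0 0 t" unfolding mem_planeInf by blast
  from x1 x2 have "y1 = 0" "y2 = 0" by (auto simp: ptP_def)
  then have "x = y3 *s ptP a b c u1 u2 u3 0 0 1" unfolding x1 ptP_scale by simp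
  then show "x \<in> vec.span {ptP a b c u1 u2 u3 0 0 1}" unfolding span1 by blast
next
  fix x assume "x \<in> vec.span {ptP a b c u1 u2 u3 0 0 1}"
  then obtain k where "x = k *s ptP a b c u1 u2 u3 0 0 1" unfolding span1 by blast
  then have x1: "x = ptP a b c u1 u2 u3 0 0 k" by (simp add: ptP_scale)
  then have "x \<in> planeP a b c u1 u2 u3" unfolding mem_planeP by blast
  moreover have "x \<in> planeInf" unfolding mem_planeInf x1 ptP_def by auto
  ultimately show "x \<in> planeP a b c u1 u2 u3 \<inter> planeInf" by blast
qed

lemma meetPI1: "pg_meet_in_one_point (planeP a b c u1 u2 u3) planeInf"
  by (rule meet_of_span[OF meetPI]) (simp add: ptP_def v5_zero)

lemma meetPI2: "pg_meet_in_one_point planeInf (planeP a b c u1 u2 u3)"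
  using meetPI1 by (simp add: pg_meet_in_one_point_def Int_commute)

lemma card_triple: "card (UNIV :: ('a \<times> 'a \<times> 'a) set) = CARD('a) ^ 3"
proof -
  have "(UNIV :: ('a \<times> 'a \<times> 'a) set) = UNIV \<times> (UNIV \<times> UNIV)" by simp
  then show ?thesis by (simp add: card_cartesian_product power3_eq_cube)
qed

lemma nonzero_line: "pg4_line L \<Longrightarrow> L \<noteq> {0}"
  unfolding pg4_line_def pg_subspace_of_dim_def by auto

lemma nonzero_plane_ne_point: "pg4_plane P \<Longrightarrow> \<not> pg_subspace_of_dim 0 P"
  unfolding pg4_plane_def pg_subspace_of_dim_def by auto

theorem theorem2p5:
  fixes q :: nat
  assumes "\<exists>p k. prime p \<and> odd p \<and> k > 0 \<and> q = p ^ k"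
    and "CARD('a::{field, finite}) = q"
  shows "\<exists>(\<LL> :: ('a ^ 5) set set) (\<PP> :: ('a ^ 5) set set).
           finite \<LL> \<and> card \<LL> = q ^ 3 + 1 \<and> (\<forall>L\<in>\<LL>. pg4_line L) \<and>
           (\<forall>L\<in>\<LL>. \<forall>M\<in>\<LL>. L \<noteq> M \<longrightarrow> pg_skew L M) \<and>
           finite \<PP> \<and> card \<PP> = q ^ 3 + 1 \<and> (\<forall>P\<in>\<PP>. pg4_plane P) \<and>
           (\<forall>P\<in>\<PP>. \<forall>Q\<in>\<PP>. P \<noteq> Q \<longrightarrow> pg_meet_in_one_point P Q) \<and>
           (\<forall>L\<in>\<LL>. \<forall>P\<in>\<PP>. \<not> L \<subseteq> P)"
proof -
  obtain a b c :: 'a where nr: "noroot a b c" using exists_noroot by blast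
  define W :: "('a \<times> 'a \<times> 'a) set" where "W = {(w1, w2, w3). w2 \<noteq> 0 \<or> w3 \<noteq> 0}"
  define D :: "('a \<times> 'a) set" where "D = insert (0, 1) (range (\<lambda>l. (1, l)))"
  define fL where "fL = (\<lambda>(w1, w2, w3). lineL a b c w1 w2 w3)"
  define fN where "fN = (\<lambda>(d1::'a, d2). lineN d1 d2)"
  define fP where "fP = (\<lambda>(u1, u2, u3). planeP a b c u1 u2 u3)"
  define LL where "LL = fL ` W \<union> fN ` D"
  define PP where "PP = fP ` UNIV \<union> {planeInf}"
  have Dnz: "d1 \<noteq> 0 \<or> d2 \<noteq> 0" if "(d1, d2) \<in> D" for d1 d2
    using that by (auto simp: D_def)
  have Dind: "d1 * e2 - d2 * e1 \<noteq> 0" if "(d1, d2) \<in> D" "(e1, e2) \<in> D" "(d1, d2) \<noteq> (e1, e2)" for d1 d2 e1 e2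
    using that by (auto simp: D_def)
  have linesL: "pg4_line (fL w)" for w by (cases w) (simp add: fL_def line_lineL)
  have linesN: "pg4_line (fN d)" if "d \<in> D" for d using that Dnz by (cases d) (simp add: fN_def line_lineN)
  have planes: "pg4_plane P" if "P \<in> PP" for P
    using that by (auto simp: PP_def fP_def plane_planeP plane_planeInf)
  have skewLL': "fL w \<inter> fL v = {0}" if "w \<noteq> v" for w v
    using that skewLL[OF nr] by (cases w; cases v) (simp add: fL_def)
  have skewLN': "fL w \<inter> fN d = {0}" if "w \<in> W" "d \<in> D" for w d
    using that skewLN[OF nr] Dnz by (cases w; cases d) (simp add: fL_def fN_def W_def)
  have skewNN': "fN d \<inter> fN e = {0}" if "d \<in> D" "e \<in> D" "d \<noteq> e" for d e
  proof -
    obtain d1 d2 e1 e2 where de: "d = (d1, d2)" "e = (e1, e2)" by (cases d; cases e) auto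
    show ?thesis unfolding de fN_def
      using skewNN[OF Dind[of d1 d2 e1 e2]] that de by simp
  qed
  have injL: "inj fL"
  proof (rule injI)
    fix w v assume eq: "fL w = fL v"
    show "w = v"
    proof (rule ccontr)
      assume "w \<noteq> v"
      then have "fL w = {0}" using skewLL'[of w v] eq by simp
      then show False using nonzero_line[OF linesL] by blast
    qed
  qed
  have injN: "inj_on fN D"
  proof (rule inj_onI)
    fix d e assume d: "d \<in> D" and e: "e \<in> D" and eq: "fN d = fN e"
    show "d = e"
    proof (rule ccontr)
      assume "d \<noteq> e"
      then have "fN d = {0}" using skewNN'[OF d e] eq by simp
      then show False using nonzero_line[OF linesN[OF d]] by blast
    qed
  qed
  have disj: "fL ` W \<inter> fN ` D = {}"
  proof (rule ccontr)
    assume "fL ` W \<inter> fN ` D \<noteq> {}"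
    then obtain w d where w: "w \<in> W" and d: "d \<in> D" and eq: "fL w = fN d" by blast
    then have "fL w = {0}" using skewLN'[OF w d] by simp
    then show False using nonzero_line[OF linesL] by blast
  qed
  have injP: "inj fP"
  proof (rule injI)
    fix u v assume eq: "fP u = fP v"
    show "u = v"
    proof (rule ccontr)
      assume "u \<noteq> v"
      then have "pg_meet_in_one_point (fP u) (fP v)"
        using meetPP[OF nr] by (cases u; cases v) (simp add: fP_def)
      then have "pg_subspace_of_dim 0 (fP u)" using eq by (simp add: pg_meet_in_one_point_def)
      moreover have "pg4_plane (fP u)" by (cases u) (simp add: fP_def plane_planeP)
      ultimately show False using nonzero_plane_ne_point by blast
    qed
  qed
  have Inf_notin: "planeInf \<notin> range fP"
  proof
    assume "planeInf \<in> range fP"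
    then obtain u where eq: "planeInf = fP u" by blast
    have "pg_meet_in_one_point (fP u) planeInf" by (cases u) (simp add: fP_def meetPI1)
    then have "pg_subspace_of_dim 0 (fP u)" using eq by (simp add: pg_meet_in_one_point_def)
    moreover have "pg4_plane (fP u)" by (cases u) (simp add: fP_def plane_planeP)
    ultimately show False using nonzero_plane_ne_point by blast
  qed
  have cardW: "card W = q ^ 3 - q"
  proof -
    have Weq: "W = UNIV - range (\<lambda>w1::'a. (w1, (0::'a), (0::'a)))" by (auto simp: W_def)
    have "card (range (\<lambda>w1::'a. (w1, (0::'a), (0::'a)))) = q"
      using assms(2) by (simp add: card_image inj_on_def)
    then show ?thesis unfolding Weq using assms(2)
      by (simp add: card_Diff_subset card_triple power3_eq_cube)
  qed
  have cardD: "card D = q + 1"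
  proof -
    have "card (range (\<lambda>l::'a. ((1::'a), l))) = q"
      using assms(2) by (simp add: card_image inj_on_def)
    moreover have "(0, 1) \<notin> range (\<lambda>l::'a. ((1::'a), l))" by auto
    ultimately show ?thesis unfolding D_def by simp
  qed
  have qle: "q \<le> q ^ 3"
  proof (cases "q = 0")
    case False then show ?thesis by (intro self_le_power) auto
  qed simp
  have cardLL: "card LL = q ^ 3 + 1"
  proof -
    have "card LL = card (fL ` W) + card (fN ` D)"
      unfolding LL_def by (rule card_Un_disjoint) (use disj in auto)
    also have "\<dots> = card W + card D"
      using card_image[OF inj_on_subset[OF injL subset_UNIV]] card_image[OF injN] by simp
    finally show ?thesis using cardW cardD qle by simp
  qed
  have cardPP: "card PP = q ^ 3 + 1"
  proof -
    have "card (range fP) = q ^ 3"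
      using card_image[OF injP] card_triple[where 'a='a] assms(2) by simp
    then show ?thesis unfolding PP_def using Inf_notin by simp
  qed
  show ?thesis
  proof (intro exI conjI)
    show "finite LL" unfolding LL_def by simp
    show "card LL = q ^ 3 + 1" by (rule cardLL)
    show "\<forall>L\<in>LL. pg4_line L" unfolding LL_def using linesL linesN by blast
    show "\<forall>L\<in>LL. \<forall>M\<in>LL. L \<noteq> M \<longrightarrow> pg_skew L M"
    proof (intro ballI impI)
      fix L M assume L: "L \<in> LL" and M: "M \<in> LL" and ne: "L \<noteq> M"
      consider (A) w v where "w \<in> W" "v \<in> W" "L = fL w" "M = fL v"
        | (B) w d where "w \<in> W" "d \<in> D" "L = fL w" "M = fN d"
        | (C) d w where "w \<in> W" "d \<in> D" "L = fN d" "M = fL w"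
        | (E) d e where "d \<in> D" "e \<in> D" "L = fN d" "M = fN e"
        using L M unfolding LL_def by blast
      then show "pg_skew L M"
      proof cases
        case A
        then have "w \<noteq> v" using ne by auto
        then show ?thesis using A skewLL' by (simp add: pg_skew_def)
      next
        case B
        then show ?thesis using skewLN' by (simp add: pg_skew_def)
      next
        case C
        then show ?thesis using skewLN'[of w d] by (simp add: Int_commute pg_skew_def)
      next
        case E
        then have "d \<noteq> e" using ne by auto
        then show ?thesis using E skewNN' by (simp add: pg_skew_def)
      qed
    qed
    show "finite PP" unfolding PP_def by simp
    show "card PP = q ^ 3 + 1" by (rule cardPP)
    show "\<forall>P\<in>PP. pg4_plane P" using planes by blast
    show "\<forall>P\<in>PP. \<forall>Q\<in>PP. P \<noteq> Q \<longrightarrow> pg_meet_in_one_point P Q"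
    proof (intro ballI impI)
      fix P Q assume P: "P \<in> PP" and Q: "Q \<in> PP" and ne: "P \<noteq> Q"
      show "pg_meet_in_one_point P Q"
      proof (cases "P = planeInf")
        case True
        with Q ne obtain v where "Q = fP v" unfolding PP_def by auto
        then show ?thesis using True by (cases v) (simp add: fP_def meetPI2)
      next
        case False
        with P obtain u where u: "P = fP u" unfolding PP_def by auto
        show ?thesis
        proof (cases "Q = planeInf")
          case True
          then show ?thesis using u by (cases u) (simp add: fP_def meetPI1)
        next
          case False
          with Q obtain v where v: "Q = fP v" unfolding PP_def by auto
          with u ne have "u \<noteq> v" by auto
          then show ?thesis using u v meetPP[OF nr] by (cases u; cases v) (simp add: fP_def)
        qed
      qed
    qed
    show "\<forall>L\<in>LL. \<forall>P\<in>PP. \<not> L \<subseteq> P"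
    proof (intro ballI)
      fix L P assume L: "L \<in> LL" and P: "P \<in> PP"
      show "\<not> L \<subseteq> P"
      proof (cases "L \<in> fL ` W")
        case True
        then obtain w1 w2 w3 where w: "w2 \<noteq> 0 \<or> w3 \<noteq> 0" and Lw: "L = lineL a b c w1 w2 w3"
          by (auto simp: W_def fL_def)
        from P consider "P = planeInf" | u1 u2 u3 where "P = planeP a b c u1 u2 u3"
          unfolding PP_def fP_def by auto
        then show ?thesis
        proof cases
          case 1 then show ?thesis using notsub_LI[OF nr w] Lw by simp
        next
          case 2 then show ?thesis using notsub_LP[of a b c w1 w2 w3] Lw by simp
        qed
      next
        case False
        with L obtain d1 d2 where d: "(d1, d2) \<in> D" and Ld: "L = lineN d1 d2"
          unfolding LL_def by (auto simp: fN_def)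
        from P consider "P = planeInf" | u1 u2 u3 where "P = planeP a b c u1 u2 u3"
          unfolding PP_def fP_def by auto
        then show ?thesis
        proof cases
          case 1 then show ?thesis using notsub_NI[OF Dnz[OF d]] Ld by simp
        next
          case 2 then show ?thesis using notsub_NP[OF Dnz[OF d], of a b c] Ld by simp
        qed
      qed
    qed
  qed
qed

end
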